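(* Let $\mathbb D=\{z\in\mathbb C:|z|<1\}$ and let $\mathcal P$ be the set of holomorphic functions $p$ on $\mathbb D$ with $\operatorname{Re} p(z)>0$ for all $z\in\mathbb D$ (no normalization $p(0)=1$ is imposed). For $p\in\mathcal P$ and $0<r<1$ set \[ I_p(r):=\int_0^{2\pi}\left|\frac{z p'(z)}{p(z)}\right|^2\,d\theta,\qquad z=re^{i\theta}. \] Then: (i) there exists an absolute constant $C>0$ such that $I_p(r)\le C(1-r)^{-2}$ for all $p\in\mathcal P$ and $0<r<1$; (ii) for each fixed $p\in\mathcal P$, $I_p(r)=o\bigl((1-r)^{-2}\bigr)$ as $r\to1^-$; (iii) if $\Phi:(0,1)\to(0,\infty)$ satisfies $\Phi(r)=o\bigl((1-r)^{-2}\bigr)$ as $r\to1^-$, then there exists $p_\Phi\in\mathcal P$ with $I_{p_\Phi}(r)\ne O(\Phi(r))$ as $r\to1^-$; (iv) $2$ is the least real exponent $\alpha$ for which there exists a constant $C_\alpha$ (independent of $p$) with $I_p(r)\le C_\alpha(1-r)^{-\alpha}$ for all $p\in\mathcal P$ and $0<r<1$. In particular, it is not true that $I_p(r)=O\bigl((1-r)^{-1}\bigr)$ as $r\to1^-$ for every $p\in\mathcal P$. *)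

theory Defs
  imports "HOL-Analysis.Analysis" "HOL-Library.Landau_Symbols"
begin

definition carath_class :: "(complex \<Rightarrow> complex) set" where
  "carath_class = {p. p holomorphic_on ball 0 1 \<and> (\<forall>z\<in>ball 0 1. Re (p z) > 0)}"

definition I_int :: "(complex \<Rightarrow> complex) \<Rightarrow> real \<Rightarrow> real" where
  "I_int p r = integral {0..2*pi}
     (\<lambda>\<theta>. (cmod ((of_real r * cis \<theta>) * deriv p (of_real r * cis \<theta>) / p (of_real r * cis \<theta>)))\<^sup>2)"

end

theory Submission
  imports Defs "HOL-Complex_Analysis.Complex_Analysis"
begin


lemma integral_cis_int:
  fixes k :: int
  shows "((\<lambda>\<theta>. cis (of_int k * \<theta>)) has_integral (if k = 0 then 2*pi else 0)) {0..2*pi}"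
proof (cases "k = 0")
  case True
  then show ?thesis using has_integral_const_real[of "1::complex" 0 "2*pi"]
    by (simp add: scaleR_conv_of_real)
next
  case False
  define F where "F = (\<lambda>\<theta>::real. (1 / (\<i> * of_int k)) * cis (of_int k * \<theta>))"
  have d: "(F has_vector_derivative cis (of_int k * t)) (at t within {0..2*pi})" for t
  proof -
    have "((\<lambda>x. cis (of_int k * x)) has_derivative (\<lambda>s. (of_int k * s) *\<^sub>R (\<i> * cis (of_int k * t)))) (at t within {0..2*pi})"
      by (intro has_derivative_cis derivative_eq_intros) auto
    then have "((\<lambda>x. cis (of_int k * x)) has_vector_derivative (of_int k * (\<i> * cis (of_int k * t)))) (at t within {0..2*pi})"
      by (simp add: has_vector_derivative_def scaleR_conv_of_real mult_ac)
    then have "((\<lambda>x. (1 / (\<i> * of_int k)) * cis (of_int k * x)) has_vector_derivative (1 / (\<i> * of_int k)) * (of_int k * (\<i> * cis (of_int k * t)))) (at t within {0..2*pi})"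
      by (rule has_vector_derivative_mult_right)
    then show ?thesis using False unfolding F_def by (simp add: field_simps)
  qed
  have "(( \<lambda>\<theta>. cis (of_int k * \<theta>)) has_integral (F (2*pi) - F 0)) {0..2*pi}"
    by (rule fundamental_theorem_of_calculus) (auto intro: d)
  moreover have "F (2*pi) = F 0"
  proof -
    have "cis (of_int k * (2*pi)) = cis (2*pi* of_int k)" by (simp add: mult_ac)
    also have "\<dots> = 1" by (rule cis_multiple_2pi) simp
    finally show ?thesis unfolding F_def by simp
  qed
  ultimately show ?thesis using False by simp
qed

lemma termwise_has_integral:
  fixes g :: "nat \<Rightarrow> real \<Rightarrow> complex"
  assumes cont: "\<And>n. continuous_on {a..b} (g n)"
    and bd: "\<And>n x. x \<in> {a..b} \<Longrightarrow> norm (g n x) \<le> M n" and sm: "summable M"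
    and J: "\<And>n. (g n has_integral J n) {a..b}"
  shows "((\<lambda>x. \<Sum>n. g n x) has_integral (\<Sum>n. J n)) {a..b}" "J sums (\<Sum>n. J n)"
proof -
  have u: "uniform_limit {a..b} (\<lambda>N x. \<Sum>i<N. g i x) (\<lambda>x. \<Sum>i. g i x) sequentially"
    by (rule Weierstrass_m_test[OF bd sm])
  have c: "continuous_on {a..b} (\<lambda>x. \<Sum>i<N. g i x)" for N
    by (intro continuous_intros cont)
  obtain I K where I: "\<And>N. ((\<lambda>x. \<Sum>i<N. g i x) has_integral I N) {a..b}"
    and K: "((\<lambda>x. \<Sum>i. g i x) has_integral K) {a..b}" and lim: "I \<longlonglongrightarrow> K"
    by (rule uniform_limit_integral[OF u c]) auto
  have "I N = (\<Sum>i<N. J i)" for N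
    using has_integral_unique[OF I[of N] has_integral_sum[of "{..<N}" g J, OF _ J]] by simp
  then have "(\<lambda>N. \<Sum>i<N. J i) = I" by auto
  then have "J sums K" using lim unfolding sums_def by simp
  then show "J sums (\<Sum>n. J n)" "((\<lambda>x. \<Sum>n. g n x) has_integral (\<Sum>n. J n)) {a..b}"
    using K sums_unique by (auto simp: sums_iff)
qed

lemma double_termwise:
  fixes u v :: "nat \<Rightarrow> real \<Rightarrow> complex"
  assumes ab: "a \<le> b"
    and cu: "\<And>n. continuous_on {a..b} (u n)" and cv: "\<And>n. continuous_on {a..b} (v n)"
    and bu: "\<And>n x. x \<in> {a..b} \<Longrightarrow> norm (u n x) \<le> U n" and bv: "\<And>n x. x \<in> {a..b} \<Longrightarrow> norm (v n x) \<le> V n"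
    and sU: "summable U" and sV: "summable V"
    and K: "\<And>n m. ((\<lambda>x. u n x * v m x) has_integral K n m) {a..b}"
  shows "((\<lambda>x. (\<Sum>n. u n x) * (\<Sum>m. v m x)) has_integral (\<Sum>n. \<Sum>m. K n m)) {a..b}"
    "summable (\<lambda>n. \<Sum>m. K n m)"
proof -
  define G where "G = (\<lambda>x. \<Sum>m. v m x)"
  have uG: "uniform_limit {a..b} (\<lambda>N x. \<Sum>i<N. v i x) G sequentially"
    unfolding G_def by (rule Weierstrass_m_test[OF bv sV])
  have cG: "continuous_on {a..b} G"
    by (rule uniform_limit_theorem[OF _ uG]) (auto intro!: always_eventually continuous_intros cv)
  have V0: "0 \<le> V n" for n using bv[of a n] ab by (meson atLeastAtMost_iff norm_ge_zero order_refl order_trans)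
  have U0: "0 \<le> U n" for n using bu[of a n] ab by (meson atLeastAtMost_iff norm_ge_zero order_refl order_trans)
  have Gb: "norm (G x) \<le> (\<Sum>m. V m)" if x: "x \<in> {a..b}" for x
  proof -
    have s1: "summable (\<lambda>m. norm (v m x))"
      by (rule summable_comparison_test[OF _ sV]) (use bv x in auto)
    have "norm (G x) \<le> (\<Sum>m. norm (v m x))" unfolding G_def by (rule summable_norm[OF s1])
    also have "\<dots> \<le> (\<Sum>m. V m)" by (rule suminf_le[OF _ s1 sV]) (use bv x in auto)
    finally show ?thesis .
  qed
  have inner: "((\<lambda>x. u n x * G x) has_integral (\<Sum>m. K n m)) {a..b}" for n
  proof -
    have sv: "summable (\<lambda>m. v m x)" if "x \<in> {a..b}" for x
      by (rule summable_norm_cancel, rule summable_comparison_test[OF _ sV]) (use bv that in auto)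
    have *: "((\<lambda>x. \<Sum>m. u n x * v m x) has_integral (\<Sum>m. K n m)) {a..b}"
    proof (rule termwise_has_integral(1)[where M = "\<lambda>m. U n * V m"])
      show "continuous_on {a..b} (\<lambda>x. u n x * v m x)" for m by (intro continuous_intros cu cv)
      show "norm (u n x * v m x) \<le> U n * V m" if "x \<in> {a..b}" for m x
        unfolding norm_mult by (rule mult_mono) (use bu bv that U0 in auto)
      show "summable (\<lambda>m. U n * V m)" by (rule summable_mult[OF sV])
    qed (rule K)
    show ?thesis
      by (rule has_integral_spike_finite[OF _ _ *, where S = "{}"])
         (auto simp: G_def suminf_mult[OF sv])
  qed
  have outer: "((\<lambda>x. \<Sum>n. u n x * G x) has_integral (\<Sum>n. \<Sum>m. K n m)) {a..b}"
    and ssum: "(\<lambda>n. \<Sum>m. K n m) sums (\<Sum>n. \<Sum>m. K n m)"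
  proof -
    have c: "continuous_on {a..b} (\<lambda>x. u n x * G x)" for n by (intro continuous_intros cu cG)
    have b: "norm (u n x * G x) \<le> U n * (\<Sum>m. V m)" if "x \<in> {a..b}" for n x
      unfolding norm_mult by (rule mult_mono) (use bu Gb that U0 in auto)
    have s: "summable (\<lambda>n. U n * (\<Sum>m. V m))" by (rule summable_mult2[OF sU])
    show "((\<lambda>x. \<Sum>n. u n x * G x) has_integral (\<Sum>n. \<Sum>m. K n m)) {a..b}"
      by (rule termwise_has_integral(1)[OF c b s inner])
    show "(\<lambda>n. \<Sum>m. K n m) sums (\<Sum>n. \<Sum>m. K n m)"
      by (rule termwise_has_integral(2)[OF c b s inner])
  qed
  have su: "summable (\<lambda>n. u n x)" if "x \<in> {a..b}" for x
    by (rule summable_norm_cancel, rule summable_comparison_test[OF _ sU]) (use bu that in auto)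
  show "((\<lambda>x. (\<Sum>n. u n x) * (\<Sum>m. v m x)) has_integral (\<Sum>n. \<Sum>m. K n m)) {a..b}"
    by (rule has_integral_spike_finite[OF _ _ outer, where S = "{}"])
       (auto simp: G_def suminf_mult2[OF su])
  show "summable (\<lambda>n. \<Sum>m. K n m)" using ssum by (rule sums_summable)
qed

lemma pow_rcis: "(of_real r * cis \<theta>) ^ n = of_real (r ^ n) * cis (real n * \<theta>)"
  by (simp add: power_mult_distrib Complex.DeMoivre)

lemma parseval_cplx:
  fixes c :: "nat \<Rightarrow> complex"
  assumes r: "0 \<le> r" and sm: "summable (\<lambda>n. norm (c n) * r ^ n)"
  shows "((\<lambda>\<theta>. (\<Sum>n. c n * (of_real r * cis \<theta>) ^ n) * cnj (\<Sum>n. c n * (of_real r * cis \<theta>) ^ n))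
           has_integral of_real (2*pi * (\<Sum>n. (norm (c n))^2 * r^(2*n)))) {0..2*pi}"
    "summable (\<lambda>n. (norm (c n))^2 * r^(2*n))"
proof -
  define u where "u = (\<lambda>n \<theta>. c n * (of_real r * cis \<theta>) ^ n)"
  define v where "v = (\<lambda>n \<theta>. cnj (c n * (of_real r * cis \<theta>) ^ n))"
  define X where "X = (\<lambda>n. 2*pi * (norm (c n))^2 * r^(2*n))"
  define K where "K = (\<lambda>n m. if m = n then complex_of_real (X n) else 0)"
  have nu: "norm (u n \<theta>) = norm (c n) * r ^ n" for n \<theta>
    using r by (simp add: u_def norm_mult norm_power)
  have nv: "norm (v n \<theta>) = norm (c n) * r ^ n" for n \<theta>
    using r by (simp add: v_def norm_mult norm_power)
  have Kint: "((\<lambda>\<theta>. u n \<theta> * v m \<theta>) has_integral K n m) {0..2*pi}" for n m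
  proof -
    have eq: "u n \<theta> * v m \<theta> = (c n * cnj (c m) * of_real (r^(n+m))) * cis (of_int (int n - int m) * \<theta>)" for \<theta>
    proof -
      have v: "v m \<theta> = cnj (c m) * of_real (r^m) * cis (- (real m * \<theta>))"
        by (simp add: v_def pow_rcis cis_cnj)
      have u: "u n \<theta> = c n * of_real (r^n) * cis (real n * \<theta>)"
        by (simp add: u_def pow_rcis)
      have "cis (real n * \<theta>) * cis (- (real m * \<theta>)) = cis (real n * \<theta> + - (real m * \<theta>))"
        by (rule cis_mult)
      also have "real n * \<theta> + - (real m * \<theta>) = of_int (int n - int m) * \<theta>"
        by (simp add: algebra_simps)
      finally have cc: "cis (real n * \<theta>) * cis (- (real m * \<theta>)) = cis (of_int (int n - int m) * \<theta>)" .
      have "u n \<theta> * v m \<theta> = (c n * cnj (c m) * (of_real (r^n) * of_real (r^m))) * (cis (real n * \<theta>) * cis (- (real m * \<theta>)))"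
        unfolding u v by (simp only: mult_ac)
      also have "\<dots> = (c n * cnj (c m) * of_real (r^(n+m))) * cis (of_int (int n - int m) * \<theta>)"
        unfolding cc by (simp add: power_add)
      finally show ?thesis .
    qed
    have "((\<lambda>\<theta>. (c n * cnj (c m) * of_real (r^(n+m))) * cis (of_int (int n - int m) * \<theta>)) has_integral
           (c n * cnj (c m) * of_real (r^(n+m))) * (if int n - int m = 0 then 2*pi else 0)) {0..2*pi}"
      by (rule has_integral_mult_right[OF integral_cis_int])
    moreover have "(c n * cnj (c m) * of_real (r^(n+m))) * (if int n - int m = 0 then 2*pi else 0) = K n m"
    proof (cases "m = n")
      case True
      have e1: "c n * cnj (c n) = of_real ((norm (c n))^2)" by (rule complex_norm_square[symmetric])
      have e3: "r^(n+n) = r^(2*n)" by (simp only: mult_2)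
      have e2: "(norm (c n))^2 * r^(n+n) * (2*pi) = X n" unfolding e3 X_def
        by (simp only: mult.assoc mult.commute mult.left_commute)
      have "c n * cnj (c n) * of_real (r^(n+n)) * complex_of_real (2*pi) = of_real ((norm (c n))^2 * r^(n+n) * (2*pi))"
        unfolding e1 by simp
      also have "\<dots> = of_real (X n)" by (simp only: e2)
      finally show ?thesis using True by (simp add: K_def)
    next
      case False
      then show ?thesis by (simp add: K_def)
    qed
    ultimately show ?thesis unfolding eq by simp
  qed
  have main: "((\<lambda>x. (\<Sum>n. u n x) * (\<Sum>m. v m x)) has_integral (\<Sum>n. \<Sum>m. K n m)) {0..2*pi}"
    "summable (\<lambda>n. \<Sum>m. K n m)"
  proof -
    have cu: "continuous_on {0..2*pi} (u n)" for n unfolding u_def by (intro continuous_intros)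
    have cv: "continuous_on {0..2*pi} (v n)" for n unfolding v_def by (intro continuous_intros)
    have bu: "norm (u n x) \<le> norm (c n) * r ^ n" for n x by (simp add: nu)
    have bv: "norm (v n x) \<le> norm (c n) * r ^ n" for n x by (simp add: nv)
    have ab: "0 \<le> 2*pi" by simp
    show "((\<lambda>x. (\<Sum>n. u n x) * (\<Sum>m. v m x)) has_integral (\<Sum>n. \<Sum>m. K n m)) {0..2*pi}"
      by (rule double_termwise(1)[OF ab cu cv bu bv sm sm Kint])
    show "summable (\<lambda>n. \<Sum>m. K n m)"
      by (rule double_termwise(2)[OF ab cu cv bu bv sm sm Kint])
  qed
  have sK: "(\<Sum>m. K n m) = of_real (X n)" for n
    using sums_single[of n "\<lambda>_. complex_of_real (X n)"] unfolding K_def by (simp add: sums_iff)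
  have sX: "summable X" using main(2) unfolding sK summable_of_real_iff .
  then show "summable (\<lambda>n. (norm (c n))^2 * r^(2*n))"
    unfolding X_def using summable_mult[of _ "2*pi"] summable_mult_D[of "2*pi"]
    by (simp add: mult.assoc)
  have vsum: "(\<Sum>m. v m x) = cnj (\<Sum>n. c n * (of_real r * cis x) ^ n)" for x
  proof -
    have "summable (\<lambda>n. c n * (of_real r * cis x) ^ n)"
      by (rule summable_norm_cancel) (simp add: nu[unfolded u_def] sm)
    then show ?thesis unfolding v_def using sums_cnj by (metis sums_iff summable_sums)
  qed
  have "(\<Sum>n. \<Sum>m. K n m) = of_real (\<Sum>n. X n)" unfolding sK by (rule suminf_of_real[OF sX, symmetric])
  also have "(\<Sum>n. X n) = 2*pi * (\<Sum>n. (norm (c n))^2 * r^(2*n))"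
    unfolding X_def by (subst suminf_mult[symmetric]) (use sX in \<open>auto simp: X_def summable_mult_D mult.assoc\<close>)
  finally have "(\<Sum>n. \<Sum>m. K n m) = of_real (2*pi * (\<Sum>n. (norm (c n))^2 * r^(2*n)))" .
  with main(1) show "((\<lambda>\<theta>. (\<Sum>n. c n * (of_real r * cis \<theta>) ^ n) * cnj (\<Sum>n. c n * (of_real r * cis \<theta>) ^ n))
           has_integral of_real (2*pi * (\<Sum>n. (norm (c n))^2 * r^(2*n)))) {0..2*pi}"
    unfolding vsum by (simp add: u_def)
qed

lemma has_integral_Re_cplx: "(f has_integral I) A \<Longrightarrow> ((\<lambda>x. Re (f x)) has_integral Re I) A"
  using has_integral_linear[OF _ bounded_linear_Re] by (simp add: o_def)

lemma parseval:
  fixes c :: "nat \<Rightarrow> complex"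
  assumes r: "0 \<le> r" and sm: "summable (\<lambda>n. norm (c n) * r ^ n)"
  shows "((\<lambda>\<theta>. (cmod (\<Sum>n. c n * (of_real r * cis \<theta>) ^ n))^2)
           has_integral (2*pi * (\<Sum>n. (norm (c n))^2 * r^(2*n)))) {0..2*pi}"
proof -
  have "((\<lambda>\<theta>. Re ((\<Sum>n. c n * (of_real r * cis \<theta>) ^ n) * cnj (\<Sum>n. c n * (of_real r * cis \<theta>) ^ n)))
           has_integral Re (of_real (2*pi * (\<Sum>n. (norm (c n))^2 * r^(2*n))))) {0..2*pi}"
    by (rule has_integral_Re_cplx[OF parseval_cplx(1)[OF r sm]])
  then show ?thesis by (simp only: complex_norm_square[symmetric] Re_complex_of_real)
qed

lemma mean_square:
  fixes c :: "nat \<Rightarrow> complex"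
  assumes r: "0 \<le> r" and sm: "summable (\<lambda>n. norm (c n) * r ^ n)"
  shows "((\<lambda>\<theta>. (\<Sum>n. c n * (of_real r * cis \<theta>) ^ n) * (\<Sum>n. c n * (of_real r * cis \<theta>) ^ n))
           has_integral (2*pi * (c 0)^2)) {0..2*pi}"
proof -
  define u where "u = (\<lambda>n \<theta>. c n * (of_real r * cis \<theta>) ^ n)"
  define K where "K = (\<lambda>(n::nat) (m::nat). if n = 0 \<and> m = 0 then complex_of_real (2*pi) * (c 0)^2 else 0)"
  have nu: "norm (u n \<theta>) = norm (c n) * r ^ n" for n \<theta>
    using r by (simp add: u_def norm_mult norm_power)
  have Kint: "((\<lambda>\<theta>. u n \<theta> * u m \<theta>) has_integral K n m) {0..2*pi}" for n m
  proof -
    have eq: "u n \<theta> * u m \<theta> = (c n * c m * of_real (r^(n+m))) * cis (of_int (int n + int m) * \<theta>)" for \<theta>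
    proof -
      have u: "u k \<theta> = c k * of_real (r^k) * cis (real k * \<theta>)" for k
        by (simp add: u_def pow_rcis)
      have "cis (real n * \<theta>) * cis (real m * \<theta>) = cis (real n * \<theta> + real m * \<theta>)"
        by (rule cis_mult)
      also have "real n * \<theta> + real m * \<theta> = of_int (int n + int m) * \<theta>"
        by (simp add: algebra_simps)
      finally have cc: "cis (real n * \<theta>) * cis (real m * \<theta>) = cis (of_int (int n + int m) * \<theta>)" .
      have "u n \<theta> * u m \<theta> = (c n * c m * (of_real (r^n) * of_real (r^m))) * (cis (real n * \<theta>) * cis (real m * \<theta>))"
        unfolding u by (simp only: mult_ac)
      also have "\<dots> = (c n * c m * of_real (r^(n+m))) * cis (of_int (int n + int m) * \<theta>)"
        unfolding cc by (simp add: power_add)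
      finally show ?thesis .
    qed
    have "((\<lambda>\<theta>. (c n * c m * of_real (r^(n+m))) * cis (of_int (int n + int m) * \<theta>)) has_integral
           (c n * c m * of_real (r^(n+m))) * (if int n + int m = 0 then 2*pi else 0)) {0..2*pi}"
      by (rule has_integral_mult_right[OF integral_cis_int])
    moreover have "(c n * c m * of_real (r^(n+m))) * (if int n + int m = 0 then 2*pi else 0) = K n m"
      by (auto simp: K_def power2_eq_square)
    ultimately show ?thesis unfolding eq by simp
  qed
  have main: "((\<lambda>x. (\<Sum>n. u n x) * (\<Sum>m. u m x)) has_integral (\<Sum>n. \<Sum>m. K n m)) {0..2*pi}"
  proof -
    have cu: "continuous_on {0..2*pi} (u n)" for n unfolding u_def by (intro continuous_intros)
    have bu: "norm (u n x) \<le> norm (c n) * r ^ n" for n x by (simp add: nu)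
    have ab: "0 \<le> 2*pi" by simp
    show ?thesis by (rule double_termwise(1)[OF ab cu cu bu bu sm sm Kint])
  qed
  have sK: "(\<Sum>m. K n m) = (if n = 0 then complex_of_real (2*pi) * (c 0)^2 else 0)" for n
  proof (cases "n = 0")
    case True
    then show ?thesis
      using sums_single[of 0 "\<lambda>_. complex_of_real (2*pi) * (c 0)^2"] unfolding K_def by (simp add: sums_iff)
  next
    case False
    then show ?thesis unfolding K_def by simp
  qed
  have "(\<Sum>n. \<Sum>m. K n m) = complex_of_real (2*pi) * (c 0)^2"
    unfolding sK using sums_single[of 0 "\<lambda>_. complex_of_real (2*pi) * (c 0)^2"] by (simp add: sums_iff)
  with main show ?thesis by (simp add: u_def)
qed



lemma powser_pieces:
  fixes a :: "nat \<Rightarrow> complex"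
  assumes sums: "\<And>z. norm z < 1 \<Longrightarrow> (\<lambda>n. a n * z^n) sums f z"
  shows "\<And>z. norm z < 1 \<Longrightarrow> (f has_field_derivative (\<Sum>n. diffs a n * z^n)) (at z)"
    and "\<And>z. norm z < 1 \<Longrightarrow> (\<lambda>n. (of_nat n * a n) * z^n) sums (z * (\<Sum>n. diffs a n * z^n))"
    and "\<And>r. 0 \<le> r \<Longrightarrow> r < 1 \<Longrightarrow> summable (\<lambda>n. norm (of_nat n * a n) * r^n)"
    and "\<And>r. 0 \<le> r \<Longrightarrow> r < 1 \<Longrightarrow> summable (\<lambda>n. norm (a n) * r^n)"
proof -
  have sm: "summable (\<lambda>n. a n * z^n)" if "norm z < 1" for z
    using sums[OF that] by (rule sums_summable)
  have fe: "f z = (\<Sum>n. a n * z^n)" if "norm z < 1" for z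
    using sums[OF that] by (simp add: sums_iff)
  show der: "(f has_field_derivative (\<Sum>n. diffs a n * z^n)) (at z)" if z: "norm z < 1" for z
  proof -
    have "((\<lambda>z. \<Sum>n. a n * z^n) has_field_derivative (\<Sum>n. diffs a n * z^n)) (at z)"
      by (rule termdiffs_strong'[of 1]) (use sm z in auto)
    then show ?thesis
      by (rule has_field_derivative_transform_within_open[where S = "ball 0 1"]) (use z fe in auto)
  qed
  have smd: "summable (\<lambda>n. diffs a n * z^n)" if "norm z < 1" for z
    by (rule termdiff_converges[of z 1]) (use sm that in auto)
  have smn: "summable (\<lambda>n. (of_nat n * a n) * z^n)" if "norm z < 1" for z
  proof -
    have "summable (\<lambda>n. z * (diffs a n * z^n))" using smd[OF that] by (rule summable_mult)
    then have "summable (\<lambda>n. (of_nat (Suc n) * a (Suc n)) * z^(Suc n))"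
      by (simp add: diffs_def mult_ac)
    then show ?thesis by (subst summable_Suc_iff[symmetric])
  qed
  show "(\<lambda>n. (of_nat n * a n) * z^n) sums (z * (\<Sum>n. diffs a n * z^n))" if z: "norm z < 1" for z
  proof -
    have "(\<lambda>n. z * (diffs a n * z^n)) sums (z * (\<Sum>n. diffs a n * z^n))"
      using smd[OF z] by (intro sums_mult summable_sums)
    then have "(\<lambda>n. (of_nat (Suc n) * a (Suc n)) * z^(Suc n)) sums (z * (\<Sum>n. diffs a n * z^n))"
      by (simp add: diffs_def mult_ac)
    then show ?thesis by (subst (asm) sums_Suc_iff) simp
  qed
  show "summable (\<lambda>n. norm (of_nat n * a n) * r^n)" if r: "0 \<le> r" "r < 1" for r
  proof -
    have "summable (\<lambda>n. norm ((of_nat n * a n) * (of_real r)^n))"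
    proof (rule powser_insidea[OF smn[of "of_real ((1 + r)/2)"]])
      show "norm (complex_of_real ((1 + r) / 2)) < 1" using r by (simp only: norm_of_real) auto
      show "norm (complex_of_real r) < norm (complex_of_real ((1 + r) / 2))" using r by (simp only: norm_of_real) auto
    qed
    then show ?thesis using r by (simp add: norm_mult norm_power)
  qed
  show "summable (\<lambda>n. norm (a n) * r^n)" if r: "0 \<le> r" "r < 1" for r
  proof -
    have "summable (\<lambda>n. norm (a n * (of_real r)^n))"
    proof (rule powser_insidea[OF sm[of "of_real ((1 + r)/2)"]])
      show "norm (complex_of_real ((1 + r) / 2)) < 1" using r by (simp only: norm_of_real) auto
      show "norm (complex_of_real r) < norm (complex_of_real ((1 + r) / 2))" using r by (simp only: norm_of_real) auto
    qed
    then show ?thesis using r by (simp add: norm_mult norm_power)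
  qed
qed

lemma I_series:
  fixes a :: "nat \<Rightarrow> complex"
  assumes sums: "\<And>z. norm z < 1 \<Longrightarrow> (\<lambda>n. a n * z^n) sums f z"
    and pe: "\<And>z. norm z < 1 \<Longrightarrow> p z = exp (f z)"
    and r: "0 \<le> r" "r < 1"
  shows "I_int p r = 2*pi * (\<Sum>n. (norm (of_nat n * a n))^2 * r^(2*n))"
    "summable (\<lambda>n. (norm (of_nat n * a n))^2 * r^(2*n))"
proof -
  have P1: "(f has_field_derivative (\<Sum>n. diffs a n * z^n)) (at z)" if "norm z < 1" for z
    using sums that by (rule powser_pieces(1))
  have P2: "(\<lambda>n. (of_nat n * a n) * z^n) sums (z * (\<Sum>n. diffs a n * z^n))" if "norm z < 1" for z
    using sums that by (rule powser_pieces(2))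
  have P3: "summable (\<lambda>n. norm (of_nat n * a n) * r^n)"
    using sums r by (rule powser_pieces(3))
  have eq: "z * deriv p z / p z = (\<Sum>n. (of_nat n * a n) * z^n)" if z: "norm z < 1" for z
  proof -
    have "((\<lambda>z. exp (f z)) has_field_derivative exp (f z) * (\<Sum>n. diffs a n * z^n)) (at z)"
      using P1[OF z] by (auto intro!: derivative_eq_intros)
    then have "(p has_field_derivative exp (f z) * (\<Sum>n. diffs a n * z^n)) (at z)"
      by (rule has_field_derivative_transform_within_open[where S = "ball 0 1"]) (use z pe in auto)
    then have "deriv p z = exp (f z) * (\<Sum>n. diffs a n * z^n)" by (rule DERIV_imp_deriv)
    then have "z * deriv p z / p z = z * (\<Sum>n. diffs a n * z^n)" using pe[OF z] by simp
    then show ?thesis using P2[OF z] by (simp add: sums_iff)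
  qed
  have "((\<lambda>\<theta>. (cmod (\<Sum>n. (of_nat n * a n) * (of_real r * cis \<theta>) ^ n))^2)
           has_integral (2*pi * (\<Sum>n. (norm (of_nat n * a n))^2 * r^(2*n)))) {0..2*pi}"
    by (rule parseval[OF r(1) P3])
  moreover have "norm (of_real r * cis \<theta>) < 1" for \<theta> using r by (simp add: norm_mult)
  ultimately show "I_int p r = 2*pi * (\<Sum>n. (norm (of_nat n * a n))^2 * r^(2*n))"
    unfolding I_int_def using eq by (simp add: integral_unique)
  show "summable (\<lambda>n. (norm (of_nat n * a n))^2 * r^(2*n))"
    by (rule parseval_cplx(2)[OF r(1) P3])
qed

lemma coeff_bound:
  fixes a :: "nat \<Rightarrow> complex"
  assumes sums: "\<And>z. norm z < 1 \<Longrightarrow> (\<lambda>n. a n * z^n) sums f z"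
    and Imb: "\<And>z. norm z < 1 \<Longrightarrow> \<bar>Im (f z)\<bar> \<le> pi/2"
    and r: "0 \<le> r" "r < 1"
  shows "(\<Sum>n. (norm (a n))^2 * r^(2*n)) - (norm (a 0))^2 \<le> pi^2/2"
proof -
  have sm: "summable (\<lambda>n. norm (a n) * r^n)" using sums r by (rule powser_pieces(4))
  define F where "F = (\<lambda>\<theta>. \<Sum>n. a n * (of_real r * cis \<theta>) ^ n)"
  define S where "S = (\<Sum>n. (norm (a n))^2 * r^(2*n))"
  have Fe: "F \<theta> = f (of_real r * cis \<theta>)" for \<theta>
  proof -
    have "norm (of_real r * cis \<theta>) < 1" using r by (simp add: norm_mult)
    then show ?thesis using sums unfolding F_def by (simp add: sums_iff)
  qed
  have h1: "((\<lambda>\<theta>. (cmod (F \<theta>))^2) has_integral (2*pi*S)) {0..2*pi}"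
    unfolding F_def S_def by (rule parseval[OF r(1) sm])
  have h2: "((\<lambda>\<theta>. Re (F \<theta> * F \<theta>)) has_integral Re (2*pi * (a 0)^2)) {0..2*pi}"
    unfolding F_def by (rule has_integral_Re_cplx[OF mean_square[OF r(1) sm]])
  have h3: "((\<lambda>\<theta>. ((cmod (F \<theta>))^2 - Re (F \<theta> * F \<theta>)) / 2) has_integral ((2*pi*S - Re (2*pi * (a 0)^2)) / 2)) {0..2*pi}"
    using has_integral_diff[OF h1 h2] by (rule has_integral_divide)
  have idt: "((cmod w)^2 - Re (w * w)) / 2 = (Im w)^2" for w :: complex
  proof -
    have "(cmod w)^2 = (Re w)^2 + (Im w)^2" by (rule cmod_power2)
    moreover have "Re (w*w) = (Re w)^2 - (Im w)^2" by (simp add: power2_eq_square)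
    ultimately show ?thesis by simp
  qed
  have h3': "((\<lambda>\<theta>. (Im (F \<theta>))^2) has_integral ((2*pi*S - Re (2*pi * (a 0)^2)) / 2)) {0..2*pi}"
    using h3 unfolding idt .
  have h4: "((\<lambda>\<theta>. (pi/2)^2) has_integral (2*pi*(pi/2)^2)) {0..2*pi}"
    using has_integral_const_real[of "(pi/2)^2" 0 "2*pi"] by simp
  have le: "(Im (F \<theta>))^2 \<le> (pi/2)^2" for \<theta>
  proof -
    have "norm (of_real r * cis \<theta>) < 1" using r by (simp add: norm_mult)
    then have "\<bar>Im (F \<theta>)\<bar> \<le> pi/2" unfolding Fe by (rule Imb)
    from power_mono[OF this abs_ge_zero, of 2] show ?thesis by simp
  qed
  have le0: "(2*pi*S - Re (2*pi * (a 0)^2)) / 2 \<le> 2*pi*(pi/2)^2"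
    by (rule has_integral_le[OF h3' h4]) (use le in auto)
  have eq1: "(2*pi*S - Re (2*pi * (a 0)^2)) / 2 = pi * (S - Re ((a 0)^2))"
    by (simp add: field_simps)
  have eq2: "2*pi*(pi/2)^2 = pi * (pi^2/2)" by (simp add: power2_eq_square)
  have "pi * (S - Re ((a 0)^2)) \<le> pi * (pi^2/2)" using le0 unfolding eq1 eq2 .
  then have "S - Re ((a 0)^2) \<le> pi^2/2" using pi_gt_zero by (simp only: mult_le_cancel_left_pos)
  moreover have "Re ((a 0)^2) \<le> (norm (a 0))^2"
    using complex_Re_le_cmod[of "(a 0)^2"] by (simp add: norm_power)
  ultimately show ?thesis unfolding S_def by linarith
qed



lemma carath_coeffs:
  assumes "p \<in> carath_class"
  obtains a :: "nat \<Rightarrow> complex" and f where "\<And>z. norm z < 1 \<Longrightarrow> (\<lambda>n. a n * z^n) sums f z"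
    "\<And>z. norm z < 1 \<Longrightarrow> p z = exp (f z)" "\<And>z. norm z < 1 \<Longrightarrow> \<bar>Im (f z)\<bar> \<le> pi/2"
proof -
  have hol: "p holomorphic_on ball 0 1" and re: "\<And>z. z \<in> ball 0 1 \<Longrightarrow> Re (p z) > 0"
    using assms by (auto simp: carath_class_def)
  define f where "f = (\<lambda>z. Ln (p z))"
  have nr: "p z \<notin> \<real>\<^sub>\<le>\<^sub>0" if "z \<in> ball 0 1" for z
    using re[OF that] by (auto simp: complex_nonpos_Reals_iff)
  have holf: "f holomorphic_on ball 0 1" unfolding f_def
    by (rule holomorphic_on_Ln'[OF nr hol])
  show ?thesis
  proof
    show "(\<lambda>n. (deriv ^^ n) f 0 / fact n * z^n) sums f z" if "norm z < 1" for z
      using holomorphic_power_series[OF holf, of z] that by simp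
    show "p z = exp (f z)" if "norm z < 1" for z
    proof -
      have "p z \<noteq> 0" using re[of z] that by auto
      then show ?thesis by (simp add: f_def)
    qed
    show "\<bar>Im (f z)\<bar> \<le> pi/2" if "norm z < 1" for z
      using Re_Ln_pos_lt_imp[OF re[of z]] that by (simp add: f_def)
  qed
qed

lemma n_pow_le: fixes r :: real assumes "0 \<le> r" "r < 1" shows "real n * r^n \<le> 1 / (1 - r)"
proof -
  have "real n * r^n = (\<Sum>i<n. r^n)" by simp
  also have "\<dots> \<le> (\<Sum>i<n. r^i)" by (rule sum_mono) (use assms in \<open>auto intro: power_decreasing\<close>)
  also have "\<dots> = (1 - r^n) / (1 - r)" using assms by (simp add: sum_gp_strict)
  also have "\<dots> \<le> 1 / (1 - r)" using assms by (intro divide_right_mono) auto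
  finally show ?thesis .
qed

lemma tail_summable:
  fixes a :: "nat \<Rightarrow> complex"
  assumes sums: "\<And>z. norm z < 1 \<Longrightarrow> (\<lambda>n. a n * z^n) sums f z"
    and Imb: "\<And>z. norm z < 1 \<Longrightarrow> \<bar>Im (f z)\<bar> \<le> pi/2"
  defines "B \<equiv> (\<lambda>n. if n = 0 then 0 else (norm (a n))^2)"
  shows "summable B" "(\<Sum>n. B n) \<le> pi^2/2"
proof -
  have B0: "0 \<le> B n" for n by (simp add: B_def)
  have part: "(\<Sum>n<N. B n * \<rho>^(2*n)) \<le> pi^2/2" if r: "0 \<le> \<rho>" "\<rho> < 1" for N \<rho>
  proof -
    have sm: "summable (\<lambda>n. norm (a n) * \<rho>^n)" using sums r by (rule powser_pieces(4))
    have s1: "summable (\<lambda>n. (norm (a n))^2 * \<rho>^(2*n))" by (rule parseval_cplx(2)[OF r(1) sm])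
    have s2: "(\<lambda>n. if n = 0 then (norm (a 0))^2 else 0) sums (norm (a 0))^2"
      using sums_single[of 0 "\<lambda>_. (norm (a 0))^2"] by simp
    have e: "(\<lambda>n. B n * \<rho>^(2*n)) = (\<lambda>n. (norm (a n))^2 * \<rho>^(2*n) - (if n = 0 then (norm (a 0))^2 else 0))"
      by (auto simp: B_def)
    have sB: "(\<lambda>n. B n * \<rho>^(2*n)) sums ((\<Sum>n. (norm (a n))^2 * \<rho>^(2*n)) - (norm (a 0))^2)"
      unfolding e by (rule sums_diff[OF summable_sums[OF s1] s2])
    have "(\<Sum>n<N. B n * \<rho>^(2*n)) \<le> (\<Sum>n. B n * \<rho>^(2*n))"
      by (rule sum_le_suminf) (use sB B0 r in \<open>auto simp: sums_iff\<close>)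
    also have "\<dots> = (\<Sum>n. (norm (a n))^2 * \<rho>^(2*n)) - (norm (a 0))^2" using sB by (simp add: sums_iff)
    also have "\<dots> \<le> pi^2/2" by (rule coeff_bound[OF sums Imb r])
    finally show ?thesis .
  qed
  have partN: "(\<Sum>n<N. B n) \<le> pi^2/2" for N
  proof -
    have lim: "((\<lambda>\<rho>. \<Sum>n<N. B n * \<rho>^(2*n)) \<longlongrightarrow> (\<Sum>n<N. B n * 1^(2*n))) (at_left 1)"
      by (intro tendsto_intros)
    have ev: "eventually (\<lambda>\<rho>. (\<Sum>n<N. B n * \<rho>^(2*n)) \<le> pi^2/2) (at_left (1::real))"
    proof (rule eventually_mono[OF eventually_at_left_real[of 0 1]])
      fix x :: real assume "x \<in> {0<..<1}"
      then show "(\<Sum>n<N. B n * x^(2*n)) \<le> pi^2/2" by (intro part) auto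
    qed simp
    have "(\<Sum>n<N. B n * 1^(2*n)) \<le> pi^2/2"
      by (rule tendsto_upperbound[OF lim ev]) simp
    then show ?thesis by simp
  qed
  show "summable B"
  proof (rule bounded_imp_summable[OF B0])
    show "(\<Sum>k\<le>n. B k) \<le> pi^2/2" for n using partN[of "Suc n"] by (simp add: lessThan_Suc_atMost)
  qed
  then show "(\<Sum>n. B n) \<le> pi^2/2" using partN by (rule suminf_le_const)
qed

lemma term_eq: "(norm (of_nat n * a n :: complex))^2 * r^(2*n) = (if n = 0 then 0 else (norm (a n))^2) * (real n * r^n)^2"
  by (simp add: norm_mult power_mult_distrib power_mult[symmetric] mult.commute[of 2] mult_ac)

lemma npow_bound: fixes r :: real assumes "0 \<le> r" "r < 1"
  shows "0 \<le> real n * (1 - r) * r^n" "real n * (1 - r) * r^n \<le> 1"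
proof -
  show "0 \<le> real n * (1 - r) * r^n" using assms by simp
  have "real n * r^n * (1 - r) \<le> 1 / (1 - r) * (1 - r)"
    by (rule mult_right_mono[OF n_pow_le[OF assms]]) (use assms in simp)
  then show "real n * (1 - r) * r^n \<le> 1" using assms by (simp add: mult_ac)
qed

lemma part_i:
  assumes p: "p \<in> carath_class" and r: "0 < r" "r < 1"
  shows "I_int p r \<le> pi^3 / (1 - r)^2"
proof -
  obtain a f where sums: "\<And>z. norm z < 1 \<Longrightarrow> (\<lambda>n. a n * z^n) sums f z"
    and pe: "\<And>z. norm z < 1 \<Longrightarrow> p z = exp (f z)" and Imb: "\<And>z. norm z < 1 \<Longrightarrow> \<bar>Im (f z)\<bar> \<le> pi/2"
    using carath_coeffs[OF p] by metis
  define B where "B = (\<lambda>n. if n = 0 then 0 else (norm (a n))^2)"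
  have sB: "summable B" and SB: "(\<Sum>n. B n) \<le> pi^2/2"
    using tail_summable[OF sums Imb] unfolding B_def by auto
  have I: "I_int p r = 2*pi * (\<Sum>n. (norm (of_nat n * a n))^2 * r^(2*n))"
    and sT: "summable (\<lambda>n. (norm (of_nat n * a n))^2 * r^(2*n))"
    using I_series[OF sums pe] r by auto
  have le: "(norm (of_nat n * a n))^2 * r^(2*n) \<le> B n * (1 / (1 - r))^2" for n
  proof -
    have "(real n * r^n)^2 \<le> (1 / (1 - r))^2"
      by (rule power_mono[OF n_pow_le]) (use r in auto)
    then show ?thesis unfolding term_eq B_def
      by (rule mult_left_mono) simp
  qed
  have "(\<Sum>n. (norm (of_nat n * a n))^2 * r^(2*n)) \<le> (\<Sum>n. B n * (1 / (1 - r))^2)"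
    by (rule suminf_le[OF le sT summable_mult2[OF sB]])
  also have "\<dots> = (\<Sum>n. B n) * (1 / (1 - r))^2" by (rule suminf_mult2[OF sB, symmetric])
  also have "\<dots> \<le> pi^2/2 * (1 / (1 - r))^2" by (rule mult_right_mono[OF SB]) simp
  finally have "I_int p r \<le> 2*pi * (pi^2/2 * (1 / (1 - r))^2)" unfolding I
    by (rule mult_left_mono) simp
  also have "\<dots> = pi^3 * (1 / (1 - r))^2"
    by (simp only: power3_eq_cube power2_eq_square) simp
  also have "\<dots> = pi^3 / (1 - r)^2" by (simp add: power_divide)
  finally show ?thesis .
qed

lemma part_ii:
  assumes p: "p \<in> carath_class"
  shows "(\<lambda>r. I_int p r) \<in> o[at_left 1](\<lambda>r. 1 / (1 - r)^2)"
proof -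
  obtain a f where sums: "\<And>z. norm z < 1 \<Longrightarrow> (\<lambda>n. a n * z^n) sums f z"
    and pe: "\<And>z. norm z < 1 \<Longrightarrow> p z = exp (f z)" and Imb: "\<And>z. norm z < 1 \<Longrightarrow> \<bar>Im (f z)\<bar> \<le> pi/2"
    using carath_coeffs[OF p] by metis
  define B where "B = (\<lambda>n. if n = 0 then 0 else (norm (a n))^2)"
  have sB: "summable B"
    using tail_summable[OF sums Imb] unfolding B_def by auto
  have B0: "0 \<le> B n" for n by (simp add: B_def)
  define A where "A = (\<lambda>k (r::real). B k * (real k * (1 - r) * r^k)^2)"
  have lim: "((\<lambda>r. A k r) \<longlongrightarrow> 0) (at_left 1)" for k
  proof -
    have "((\<lambda>r. A k r) \<longlongrightarrow> B k * (real k * (1 - 1) * 1^k)^2) (at_left 1)"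
      unfolding A_def by (intro tendsto_intros)
    then show ?thesis by simp
  qed
  have bd: "eventually (\<lambda>(k,r). norm (A k r) \<le> B k) (at_top \<times>\<^sub>F at_left 1)"
  proof -
    have "eventually (\<lambda>x. True \<and> snd x \<in> {0<..<(1::real)}) (at_top \<times>\<^sub>F at_left 1)"
      by (rule eventually_prodI[of "\<lambda>_. True"]) (auto intro: eventually_mono[OF eventually_at_left_real[of 0 "1::real"]])
    then show ?thesis
    proof (rule eventually_mono)
      fix x :: "nat \<times> real" assume "True \<and> snd x \<in> {0<..<1}"
      then obtain k r where x: "x = (k, r)" and r: "0 < r" "r < 1" by (cases x) auto
      have "(real k * (1 - r) * r^k)^2 \<le> 1^2"
        by (rule power_mono) (use npow_bound[of r k] r in auto)
      then have "norm (A k r) \<le> B k" unfolding A_def using B0[of k]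
        by (simp add: abs_mult mult_left_le)
      then show "case x of (k, r) \<Rightarrow> norm (A k r) \<le> B k" using x by simp
    qed
  qed
  have T: "((\<lambda>r. \<Sum>k. A k r) \<longlongrightarrow> (\<Sum>k. (0::real))) (at_left 1)"
    using tannerys_theorem[OF lim bd sB] by simp
  have ev: "eventually (\<lambda>r. I_int p r / (1 / (1 - r)^2) = 2*pi * (\<Sum>k. A k r)) (at_left (1::real))"
  proof (rule eventually_mono[OF eventually_at_left_real[of 0 1]])
    fix r :: real assume "r \<in> {0<..<1}"
    then have r: "0 < r" "r < 1" by auto
    have I: "I_int p r = 2*pi * (\<Sum>n. (norm (of_nat n * a n))^2 * r^(2*n))"
      and sT: "summable (\<lambda>n. (norm (of_nat n * a n))^2 * r^(2*n))"
      using I_series[OF sums pe] r by auto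
    have "A k r = (norm (of_nat k * a k))^2 * r^(2*k) * (1 - r)^2" for k
      unfolding A_def term_eq B_def by (simp add: power_mult_distrib mult_ac)
    then have "(\<Sum>k. A k r) = (\<Sum>n. (norm (of_nat n * a n))^2 * r^(2*n)) * (1 - r)^2"
      by (simp add: suminf_mult2[OF sT])
    then show "I_int p r / (1 / (1 - r)^2) = 2*pi * (\<Sum>k. A k r)" unfolding I by simp
  qed simp
  have "((\<lambda>r. I_int p r / (1 / (1 - r)^2)) \<longlongrightarrow> 2*pi * 0) (at_left 1)"
    by (rule Lim_transform_eventually[OF tendsto_mult[OF tendsto_const T[simplified]]])
       (use ev in \<open>auto elim!: eventually_mono\<close>)
  then have "((\<lambda>r. I_int p r / (1 / (1 - r)^2)) \<longlongrightarrow> 0) (at_left 1)" by simp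
  moreover have "eventually (\<lambda>r. 1 / (1 - r)^2 \<noteq> (0::real)) (at_left 1)"
    by (rule eventually_mono[OF eventually_at_left_real[of 0 1]]) auto
  ultimately show ?thesis by (rule smalloI_tendsto)
qed



definition rN :: "nat \<Rightarrow> real" where "rN N = 1 - 1 / (4 * real N)"

lemma rN_lim: "filterlim rN (at_left 1) sequentially"
proof (rule tendsto_imp_filterlim_at_left)
  have "(\<lambda>N. (1/4) * (1 / real N)) \<longlonglongrightarrow> (1/4) * 0"
    by (intro tendsto_intros)
  then have "(\<lambda>N. 1 / (4 * real N)) \<longlonglongrightarrow> 0" by simp
  then have "(\<lambda>N. 1 - 1 / (4 * real N)) \<longlonglongrightarrow> 1 - 0" by (intro tendsto_intros)
  moreover have "rN = (\<lambda>N. 1 - 1 / (4 * real N))" by (rule ext) (simp add: rN_def)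
  ultimately show "(rN \<longlongrightarrow> 1) sequentially" by simp
  show "\<forall>\<^sub>F x in sequentially. rN x < 1"
    using eventually_ge_at_top[of "1::nat"] by eventually_elim (simp add: rN_def)
qed

lemma rN_props: assumes "1 \<le> N" shows "0 < rN N" "rN N < 1" "1 / (1 - rN N)^2 = (4 * real N)^2"
    "1/2 \<le> rN N ^ (2*N)"
proof -
  have N: "real N \<ge> 1" using assms by simp
  show "0 < rN N" "rN N < 1" using N by (auto simp: rN_def field_simps)
  show "1 / (1 - rN N)^2 = (4 * real N)^2" using N by (simp add: rN_def power_divide)
  have "1 + real (2*N) * (- 1 / (4 * real N)) \<le> (1 + (- 1 / (4 * real N))) ^ (2*N)"
    by (rule Bernoulli_inequality) (use N in \<open>auto simp: field_simps\<close>)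
  moreover have "1 + real (2*N) * (- 1 / (4 * real N)) = 1/2" using N by (simp add: field_simps)
  ultimately show "1/2 \<le> rN N ^ (2*N)" by (simp add: rN_def)
qed

lemma select_N:
  fixes \<Phi> :: "real \<Rightarrow> real"
  assumes o: "\<Phi> \<in> o[at_left 1](\<lambda>r. 1 / (1 - r)^2)" and d: "\<delta> > 0"
  shows "\<exists>N\<ge>M. 1 \<le> N \<and> \<Phi> (rN N) \<le> \<delta> * (4 * real N)^2"
proof -
  have "eventually (\<lambda>r. norm (\<Phi> r) \<le> \<delta> * norm (1 / (1 - r)^2)) (at_left 1)"
    by (rule landau_o.smallD[OF o d])
  then have "eventually (\<lambda>N. norm (\<Phi> (rN N)) \<le> \<delta> * norm (1 / (1 - rN N)^2)) sequentially"
    by (rule eventually_compose_filterlim[OF _ rN_lim])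
  moreover have "eventually (\<lambda>N. N \<ge> max M 1) sequentially" by (rule eventually_ge_at_top)
  ultimately have "eventually (\<lambda>N. N \<ge> max M 1 \<and> norm (\<Phi> (rN N)) \<le> \<delta> * norm (1 / (1 - rN N)^2)) sequentially"
    by eventually_elim auto
  then obtain N0 where N0: "\<forall>n\<ge>N0. n \<ge> max M 1 \<and> norm (\<Phi> (rN n)) \<le> \<delta> * norm (1 / (1 - rN n)^2)"
    unfolding eventually_sequentially by blast
  define N where "N = N0"
  have N: "N \<ge> max M 1" "norm (\<Phi> (rN N)) \<le> \<delta> * norm (1 / (1 - rN N)^2)"
    using N0 unfolding N_def by auto
  have "\<Phi> (rN N) \<le> norm (\<Phi> (rN N))" by simp
  also have "\<dots> \<le> \<delta> * norm (1 / (1 - rN N)^2)" by (rule N(2))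
  also have "\<dots> = \<delta> * (4 * real N)^2" using rN_props(3)[of N] N(1) by simp
  finally have "\<Phi> (rN N) \<le> \<delta> * (4 * real N)^2" .
  then show ?thesis using N by auto
qed

primrec seqN :: "(nat \<Rightarrow> nat \<Rightarrow> nat) \<Rightarrow> nat \<Rightarrow> nat" where
  "seqN g 0 = g 0 0"
| "seqN g (Suc k) = g (Suc k) (Suc (seqN g k))"

lemma part_iii:
  fixes \<Phi> :: "real \<Rightarrow> real"
  assumes pos: "\<forall>r. 0 < r \<and> r < 1 \<longrightarrow> \<Phi> r > 0" and o: "\<Phi> \<in> o[at_left 1](\<lambda>r. 1 / (1 - r)^2)"
  shows "\<exists>p\<in>carath_class. (\<lambda>r. I_int p r) \<notin> O[at_left 1](\<Phi>)"
proof -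
  define \<delta> where "\<delta> = (\<lambda>k::nat. (1/4::real)^Suc k / (16 * real (Suc k)))"
  have \<delta>pos: "\<delta> k > 0" for k by (simp add: \<delta>_def)
  define g where "g = (\<lambda>k M. SOME N. N \<ge> M \<and> 1 \<le> N \<and> \<Phi> (rN N) \<le> \<delta> k * (4 * real N)^2)"
  have gP: "g k M \<ge> M \<and> 1 \<le> g k M \<and> \<Phi> (rN (g k M)) \<le> \<delta> k * (4 * real (g k M))^2" for k M
    unfolding g_def by (rule someI_ex) (use select_N[OF o \<delta>pos[of k], of M] in blast)
  define Ns where "Ns = seqN g"
  have NsP: "1 \<le> Ns k \<and> \<Phi> (rN (Ns k)) \<le> \<delta> k * (4 * real (Ns k))^2" for k
    by (cases k) (use gP in \<open>auto simp: Ns_def\<close>)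
  have mono: "strict_mono Ns"
    unfolding strict_mono_Suc_iff
  proof
    fix n
    have "Suc (Ns n) \<le> g (Suc n) (Suc (Ns n))" using gP[where k = "Suc n" and M = "Suc (Ns n)"] by simp
    then show "Ns n < Ns (Suc n)" by (simp add: Ns_def)
  qed
  have injN: "inj Ns" by (rule inj_onI) (use strict_mono_eq[OF mono] in auto)
  define a where "a = (\<lambda>N. if N \<in> range Ns then (1/2::real)^Suc (inv Ns N) else 0)"
  have aN: "a (Ns k) = (1/2)^Suc k" for k by (simp add: a_def inv_f_f[OF injN])
  have a0: "0 \<le> a n" for n by (simp add: a_def)
  have asums: "a sums 1"
  proof -
    have "(\<lambda>k. a (Ns k)) sums 1" unfolding aN by (rule power_half_series)
    then show ?thesis by (subst (asm) sums_mono_reindex[OF mono]) (auto simp: a_def)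
  qed
  have sa: "summable a" using asums by (rule sums_summable)
  have suma: "(\<Sum>n. a n) = 1" using asums by (simp add: sums_iff)
  define f where "f = (\<lambda>z::complex. \<Sum>n. of_real (a n) * z^n)"
  have nb: "norm (of_real (a n) * z^n) \<le> a n" if "norm z < 1" for z :: complex and n
  proof -
    have "norm (z^n) \<le> 1" using that by (simp add: norm_power power_le_one)
    then show ?thesis using a0[of n] by (simp add: norm_mult mult_left_le)
  qed
  have sn: "summable (\<lambda>n. norm (of_real (a n) * z^n))" if "norm z < 1" for z :: complex
    by (rule summable_comparison_test[OF _ sa]) (use nb that in auto)
  have fsums: "(\<lambda>n. of_real (a n) * z^n) sums f z" if "norm z < 1" for z
    unfolding f_def using summable_norm_cancel[OF sn[OF that]] by (rule summable_sums)
  have fb: "norm (f z) \<le> 1" if "norm z < 1" for z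
  proof -
    have "norm (f z) \<le> (\<Sum>n. norm (of_real (a n) * z^n))" unfolding f_def by (rule summable_norm[OF sn[OF that]])
    also have "\<dots> \<le> (\<Sum>n. a n)" by (rule suminf_le[OF _ sn[OF that] sa]) (use nb that in auto)
    finally show ?thesis using suma by simp
  qed
  define p where "p = (\<lambda>z. exp (f z))"
  have holf: "f holomorphic_on ball 0 1"
    by (rule power_series_holomorphic[where a = "\<lambda>n. of_real (a n)"]) (use fsums in auto)
  have pC: "p \<in> carath_class"
  proof -
    have "p holomorphic_on ball 0 1" unfolding p_def by (intro holomorphic_intros holf)
    moreover have "Re (p z) > 0" if "z \<in> ball 0 1" for z
    proof -
      have "\<bar>Im (f z)\<bar> \<le> 1" using fb[of z] that abs_Im_le_cmod[of "f z"] by auto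
      moreover have "1 < pi/2" using pi_gt3 by simp
      ultimately have "cos (Im (f z)) > 0" by (intro cos_gt_zero_pi) auto
      then show ?thesis by (simp add: p_def Re_exp)
    qed
    ultimately show ?thesis by (auto simp: carath_class_def)
  qed
  have Ilow: "pi * (real (Ns k))^2 * (1/4)^Suc k \<le> I_int p (rN (Ns k))" for k
  proof -
    define N where "N = Ns k"
    define r where "r = rN N"
    have N1: "1 \<le> N" using NsP[of k] by (simp add: N_def)
    have r: "0 \<le> r" "r < 1" using rN_props[OF N1] by (auto simp: r_def)
    have pe: "p z = exp (f z)" for z by (simp add: p_def)
    have I: "I_int p r = 2*pi * (\<Sum>n. (norm (of_nat n * of_real (a n) :: complex))^2 * r^(2*n))"
      and sT: "summable (\<lambda>n. (norm (of_nat n * of_real (a n) :: complex))^2 * r^(2*n))"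
      using I_series[OF fsums pe r] by auto
    have le1: "(norm (of_nat N * of_real (a N) :: complex))^2 * r^(2*N) \<le> (\<Sum>n. (norm (of_nat n * of_real (a n) :: complex))^2 * r^(2*n))"
      using sum_le_suminf[OF sT, of "{N}"] r by simp
    have eqA: "(norm (of_nat N * of_real (a N) :: complex))^2 = (real N)^2 * (1/4)^Suc k"
    proof -
      have e1: "norm (of_nat N * of_real (a N) :: complex) = real N * (1/2)^Suc k"
        by (simp add: norm_mult N_def aN norm_power)
      have e2: "((1/2::real)^Suc k)^2 = (1/4)^Suc k"
        by (simp only: power2_eq_square power_mult_distrib[symmetric]) simp
      show ?thesis unfolding e1 power_mult_distrib e2 ..
    qed
    have h: "1/2 \<le> r^(2*N)" using rN_props(4)[OF N1] by (simp add: r_def)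
    have "(real N)^2 * (1/4)^Suc k * (1/2) \<le> (real N)^2 * (1/4)^Suc k * r^(2*N)"
      by (rule mult_left_mono[OF h]) simp
    also have "\<dots> \<le> (\<Sum>n. (norm (of_nat n * of_real (a n) :: complex))^2 * r^(2*n))"
      using le1 unfolding eqA .
    finally have "(real N)^2 * (1/4)^Suc k * (1/2) \<le> (\<Sum>n. (norm (of_nat n * of_real (a n) :: complex))^2 * r^(2*n))" .
    then show ?thesis unfolding N_def[symmetric] r_def[symmetric] I by simp
  qed
  have Phiup: "\<Phi> (rN (Ns k)) \<le> (real (Ns k))^2 * (1/4)^Suc k / real (Suc k)" for k
  proof -
    have "\<Phi> (rN (Ns k)) \<le> \<delta> k * (4 * real (Ns k))^2" using NsP[of k] by simp
    also have "\<dots> = (real (Ns k))^2 * (1/4)^Suc k / real (Suc k)"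
    proof -
      have gen: "X / (16 * Y) * (4 * n)^2 = n^2 * X / Y" if "Y \<noteq> 0" for X Y n :: real
        using that by (simp add: power2_eq_square field_simps)
      show ?thesis unfolding \<delta>_def by (rule gen) simp
    qed
    finally show ?thesis .
  qed
  show ?thesis
  proof (intro bexI[OF _ pC] notI)
    assume "(\<lambda>r. I_int p r) \<in> O[at_left 1](\<Phi>)"
    then obtain c where c: "c > 0" and ev: "eventually (\<lambda>r. norm (I_int p r) \<le> c * norm (\<Phi> r)) (at_left 1)"
      by (elim landau_o.bigE)
    have lim: "filterlim (\<lambda>k. rN (Ns k)) (at_left 1) sequentially"
      by (rule filterlim_compose[OF rN_lim filterlim_subseq[OF mono]])
    have "eventually (\<lambda>k. norm (I_int p (rN (Ns k))) \<le> c * norm (\<Phi> (rN (Ns k)))) sequentially"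
      by (rule eventually_compose_filterlim[OF ev lim])
    moreover have "eventually (\<lambda>k. k \<ge> nat \<lceil>c\<rceil>) sequentially" by (rule eventually_ge_at_top)
    ultimately have "eventually (\<lambda>k. k \<ge> nat \<lceil>c\<rceil> \<and> norm (I_int p (rN (Ns k))) \<le> c * norm (\<Phi> (rN (Ns k)))) sequentially"
      by (rule eventually_conj[OF _ _, THEN eventually_mono]) auto
    then obtain k where k: "k \<ge> nat \<lceil>c\<rceil>" and kI: "norm (I_int p (rN (Ns k))) \<le> c * norm (\<Phi> (rN (Ns k)))"
      unfolding eventually_sequentially by blast
    define X where "X = (real (Ns k))^2 * (1/4::real)^Suc k"
    have X: "X > 0" using NsP[of k] by (simp add: X_def)
    have N1: "1 \<le> Ns k" using NsP[of k] by simp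
    have Phip: "\<Phi> (rN (Ns k)) > 0" using pos rN_props[OF N1] by auto
    have "pi * X \<le> I_int p (rN (Ns k))" using Ilow[of k] by (simp add: X_def mult.assoc)
    also have "\<dots> \<le> c * \<Phi> (rN (Ns k))" using kI Phip by simp
    also have "\<dots> \<le> c * (X / real (Suc k))" unfolding X_def by (rule mult_left_mono[OF Phiup[of k]]) (use c in simp)
    finally have "pi * X \<le> c * X / real (Suc k)" by simp
    then have "pi * X + pi * (X * real k) \<le> X * c" using X by (simp add: field_simps)
    then have "X * (pi * real (Suc k)) \<le> X * c" by (simp add: algebra_simps)
    then have "pi * real (Suc k) \<le> c" using X by (simp only: mult_le_cancel_left_pos)
    moreover have "c < real (Suc k)" using k by linarith
    moreover have "real (Suc k) \<le> pi * real (Suc k)" using pi_gt3 by simp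
    ultimately show False by linarith
  qed
qed



lemma I_nonneg:
  assumes p: "p \<in> carath_class" and r: "0 < r" "r < 1"
  shows "0 \<le> I_int p r"
proof -
  obtain a f where sums: "\<And>z. norm z < 1 \<Longrightarrow> (\<lambda>n. a n * z^n) sums f z"
    and pe: "\<And>z. norm z < 1 \<Longrightarrow> p z = exp (f z)"
    using carath_coeffs[OF p] by metis
  have I: "I_int p r = 2*pi * (\<Sum>n. (norm (of_nat n * a n))^2 * r^(2*n))"
    and sT: "summable (\<lambda>n. (norm (of_nat n * a n))^2 * r^(2*n))"
    using I_series[OF sums pe] r by auto
  show ?thesis unfolding I using r by (intro mult_nonneg_nonneg suminf_nonneg[OF sT]) auto
qed

lemma powr_phi_small:
  fixes \<alpha> :: real assumes "\<alpha> < 2"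
  shows "(\<lambda>r. (1 - r) powr (- \<alpha>)) \<in> o[at_left 1](\<lambda>r. 1 / (1 - r)^2)"
proof (rule smalloI_tendsto)
  have ev: "eventually (\<lambda>r. (1 - r) powr (- \<alpha>) / (1 / (1 - r)^2) = (1 - r) powr (2 - \<alpha>)) (at_left (1::real))"
  proof (rule eventually_mono[OF eventually_at_left_real[of 0 1]])
    fix r :: real assume "r \<in> {0<..<1}"
    then have r: "0 < 1 - r" by auto
    have p2: "(1 - r) powr 2 = (1 - r)^2" using r by simp
    have "(1 - r) powr (- \<alpha>) / (1 / (1 - r)^2) = (1 - r) powr (- \<alpha>) * (1 - r) powr 2"
      unfolding p2 by simp
    also have "\<dots> = (1 - r) powr (2 - \<alpha>)" by (simp add: powr_add[symmetric])
    finally show "(1 - r) powr (- \<alpha>) / (1 / (1 - r)^2) = (1 - r) powr (2 - \<alpha>)" .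
  qed simp
  have "((\<lambda>r. (1 - r) powr (2 - \<alpha>)) \<longlongrightarrow> 0) (at_left (1::real))"
  proof (rule tendsto_zero_powrI)
    show "((\<lambda>r. 1 - r) \<longlongrightarrow> (0::real)) (at_left 1)"
      using tendsto_diff[OF tendsto_const[of "1::real"] tendsto_ident_at[of 1 "{..<1}"]] by simp
    show "((\<lambda>r. 2 - \<alpha>) \<longlongrightarrow> 2 - \<alpha>) (at_left 1)" by simp
    show "\<forall>\<^sub>F x in at_left 1. 0 \<le> 1 - (x::real)"
      by (rule eventually_mono[OF eventually_at_left_real[of 0 1]]) auto
  qed (use assms in simp)
  moreover have "eventually (\<lambda>r. (1 - r) powr (2 - \<alpha>) = (1 - r) powr (- \<alpha>) / (1 / (1 - r)^2)) (at_left (1::real))"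
    using ev by eventually_elim simp
  ultimately show "((\<lambda>r. (1 - r) powr (- \<alpha>) / (1 / (1 - r)^2)) \<longlongrightarrow> 0) (at_left 1)"
    by (rule Lim_transform_eventually)
  show "\<forall>\<^sub>F x in at_left 1. 1 / (1 - x)^2 \<noteq> (0::real)"
    by (rule eventually_mono[OF eventually_at_left_real[of 0 1]]) auto
qed

lemma inv_phi_small:
  "(\<lambda>r::real. 1 / (1 - r) :: real) \<in> o[at_left 1](\<lambda>r::real. 1 / (1 - r)^2 :: real)"
proof (rule smalloI_tendsto)
  have ev: "eventually (\<lambda>r. 1 / (1 - r) / (1 / (1 - r)^2) = 1 - r) (at_left (1::real))"
    by (rule eventually_mono[OF eventually_at_left_real[of 0 1]]) (auto simp: power2_eq_square)
  have t: "((\<lambda>r. 1 - r) \<longlongrightarrow> (0::real)) (at_left 1)"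
    using tendsto_diff[OF tendsto_const[of "1::real"] tendsto_ident_at[of 1 "{..<1}"]] by simp
  have e: "eventually (\<lambda>r. 1 - r = 1 / (1 - r) / (1 / (1 - r)^2)) (at_left (1::real))"
    using ev by eventually_elim simp
  show "((\<lambda>r::real. 1 / (1 - r) / (1 / (1 - r)^2)) \<longlongrightarrow> 0) (at_left 1)"
    using Lim_transform_eventually[OF t e] by simp
  show "\<forall>\<^sub>F x in at_left 1. 1 / (1 - x)^2 \<noteq> (0::real)"
    by (rule eventually_mono[OF eventually_at_left_real[of 0 1]]) auto
qed

theorem corollary1p4:
  shows
    "(\<exists>C>0. \<forall>p\<in>carath_class. \<forall>r. 0 < r \<and> r < 1 \<longrightarrow> I_int p r \<le> C / (1 - r)\<^sup>2)
   \<and> (\<forall>p\<in>carath_class. (\<lambda>r. I_int p r) \<in> o[at_left 1](\<lambda>r. 1 / (1 - r)\<^sup>2))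
   \<and> (\<forall>\<Phi> :: real \<Rightarrow> real.
        (\<forall>r. 0 < r \<and> r < 1 \<longrightarrow> \<Phi> r > 0) \<and> \<Phi> \<in> o[at_left 1](\<lambda>r. 1 / (1 - r)\<^sup>2)
        \<longrightarrow> (\<exists>p\<in>carath_class. (\<lambda>r. I_int p r) \<notin> O[at_left 1](\<Phi>)))
   \<and> (let S = {\<alpha>::real. \<exists>C::real. \<forall>p\<in>carath_class. \<forall>r. 0 < r \<and> r < 1 \<longrightarrow>
                   I_int p r \<le> C * (1 - r) powr (- \<alpha>)}
      in 2 \<in> S \<and> (\<forall>\<alpha>\<in>S. 2 \<le> \<alpha>))
   \<and> \<not> (\<forall>p\<in>carath_class. (\<lambda>r. I_int p r) \<in> O[at_left 1](\<lambda>r. 1 / (1 - r)))"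
proof (intro conjI)
  show "\<exists>C>0. \<forall>p\<in>carath_class. \<forall>r. 0 < r \<and> r < 1 \<longrightarrow> I_int p r \<le> C / (1 - r)\<^sup>2"
    by (rule exI[of _ "pi^3"]) (auto intro: part_i)
  show "\<forall>p\<in>carath_class. (\<lambda>r. I_int p r) \<in> o[at_left 1](\<lambda>r. 1 / (1 - r)\<^sup>2)"
    using part_ii by blast
  show "\<forall>\<Phi> :: real \<Rightarrow> real.
        (\<forall>r. 0 < r \<and> r < 1 \<longrightarrow> \<Phi> r > 0) \<and> \<Phi> \<in> o[at_left 1](\<lambda>r. 1 / (1 - r)\<^sup>2)
        \<longrightarrow> (\<exists>p\<in>carath_class. (\<lambda>r. I_int p r) \<notin> O[at_left 1](\<Phi>))"
    using part_iii by blast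
  show "let S = {\<alpha>::real. \<exists>C::real. \<forall>p\<in>carath_class. \<forall>r. 0 < r \<and> r < 1 \<longrightarrow>
                   I_int p r \<le> C * (1 - r) powr (- \<alpha>)}
      in 2 \<in> S \<and> (\<forall>\<alpha>\<in>S. 2 \<le> \<alpha>)"
    unfolding Let_def
  proof (intro conjI ballI)
    have "I_int p r \<le> pi^3 * (1 - r) powr (- 2)" if "p \<in> carath_class" "0 < r" "r < 1" for p r
    proof -
      have "(1 - r) powr (- 2) = 1 / (1 - r)^2"
        using that by (simp add: powr_minus divide_inverse)
      then show ?thesis using part_i[OF that] by simp
    qed
    then show "(2::real) \<in> {\<alpha>. \<exists>C. \<forall>p\<in>carath_class. \<forall>r. 0 < r \<and> r < 1 \<longrightarrow> I_int p r \<le> C * (1 - r) powr - \<alpha>}"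
      by blast
  next
    fix \<alpha> :: real
    assume "\<alpha> \<in> {\<alpha>. \<exists>C. \<forall>p\<in>carath_class. \<forall>r. 0 < r \<and> r < 1 \<longrightarrow> I_int p r \<le> C * (1 - r) powr - \<alpha>}"
    then obtain C where C: "\<And>p r. p \<in> carath_class \<Longrightarrow> 0 < r \<Longrightarrow> r < 1 \<Longrightarrow> I_int p r \<le> C * (1 - r) powr - \<alpha>"
      by blast
    show "2 \<le> \<alpha>"
    proof (rule ccontr)
      assume "\<not> 2 \<le> \<alpha>"
      then have a2: "\<alpha> < 2" by simp
      have pos: "\<forall>r. 0 < r \<and> r < 1 \<longrightarrow> (\<lambda>r. (1 - r) powr (- \<alpha>)) r > 0" by auto
      obtain p where p: "p \<in> carath_class" and nO: "(\<lambda>r. I_int p r) \<notin> O[at_left 1](\<lambda>r. (1 - r) powr (- \<alpha>))"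
        using part_iii[OF pos powr_phi_small[OF a2]] by blast
      have "(\<lambda>r. I_int p r) \<in> O[at_left 1](\<lambda>r. (1 - r) powr (- \<alpha>))"
      proof (rule bigoI[of _ C])
        show "\<forall>\<^sub>F x in at_left 1. norm (I_int p x) \<le> C * norm ((1 - x) powr - \<alpha>)"
        proof (rule eventually_mono[OF eventually_at_left_real[of 0 1]])
          fix x :: real assume "x \<in> {0<..<1}"
          then have x: "0 < x" "x < 1" by auto
          show "norm (I_int p x) \<le> C * norm ((1 - x) powr - \<alpha>)"
            using C[OF p x] I_nonneg[OF p x] by simp
        qed simp
      qed
      with nO show False by contradiction
    qed
  qed
  show "\<not> (\<forall>p\<in>carath_class. (\<lambda>r. I_int p r) \<in> O[at_left 1](\<lambda>r. 1 / (1 - r)))"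
  proof
    assume all: "\<forall>p\<in>carath_class. (\<lambda>r. I_int p r) \<in> O[at_left 1](\<lambda>r. 1 / (1 - r))"
    have pos: "\<forall>r. 0 < r \<and> r < 1 \<longrightarrow> (\<lambda>r. 1 / (1 - r)) r > (0::real)" by auto
    obtain p where p: "p \<in> carath_class" and nO: "(\<lambda>r. I_int p r) \<notin> O[at_left 1](\<lambda>r. 1 / (1 - r))"
      using part_iii[OF pos inv_phi_small] by blast
    then show False using all by blast
  qed
qed

end
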